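(* Let $\mathcal G$ be a family of connected graphs and $k$ a constant. The following are equivalent: (1) there is a polynomial $p_k$ such that for every $G=(V,E)\in\mathcal G$, a uniformly random spanning tree of $G$ is $k$-splittable with probability at least $1/p_k(|V|)$; (2) there is a polynomial $q_k$ such that for every $G=(V,E)\in\mathcal G$, a random connected $k$-partition of $G$ drawn with probability proportional to its spanning tree weight is balanced with probability at least $1/q_k(|V|)$.
   Context: A tree $T$ is $k$-splittable if there exist $k-1$ edges of $T$ whose removal leaves a forest whose $k$ connected components all have the same number of vertices. A connected $k$-partition of $G=(V,E)$ is a partition of $V$ into $k$ nonempty sets (pieces) each inducing a connected subgraph; it is balanced if all pieces have equal size. For a graph $H$, $\tau(H)$ is its number of spanning trees, and the spanning tree weight of a connected partition $P$ is $\prod_{S\in P}\tau(G[S])$. *)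

theory Defs
  imports "HOL-Computational_Algebra.Polynomial"
begin

definition wf_graph :: "'a set \<Rightarrow> 'a set set \<Rightarrow> bool" where
  "wf_graph V E \<longleftrightarrow> finite V \<and> (\<forall>e\<in>E. e \<subseteq> V \<and> card e = 2)"

definition adj :: "'a set set \<Rightarrow> ('a \<times> 'a) set" where
  "adj E = {(u, v). {u, v} \<in> E}"

definition graph_connected :: "'a set \<Rightarrow> 'a set set \<Rightarrow> bool" where
  "graph_connected V E \<longleftrightarrow> V \<noteq> {} \<and> (\<forall>u\<in>V. \<forall>v\<in>V. (u, v) \<in> (adj E)\<^sup>*)"

definition induced_edges :: "'a set set \<Rightarrow> 'a set \<Rightarrow> 'a set set" where
  "induced_edges E S = {e\<in>E. e \<subseteq> S}"

definition components :: "'a set \<Rightarrow> 'a set set \<Rightarrow> 'a set set" where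
  "components V E = (\<lambda>u. {v\<in>V. (u, v) \<in> (adj E)\<^sup>*}) ` V"

definition is_tree :: "'a set \<Rightarrow> 'a set set \<Rightarrow> bool" where
  "is_tree V T \<longleftrightarrow> graph_connected V T \<and> (\<forall>e\<in>T. \<not> graph_connected V (T - {e}))"

definition spanning_trees :: "'a set \<Rightarrow> 'a set set \<Rightarrow> 'a set set set" where
  "spanning_trees V E = {T. T \<subseteq> E \<and> is_tree V T}"

definition tau :: "'a set \<Rightarrow> 'a set set \<Rightarrow> nat" where
  "tau V E = card (spanning_trees V E)"

definition k_splittable :: "nat \<Rightarrow> 'a set \<Rightarrow> 'a set set \<Rightarrow> bool" where
  "k_splittable k V T \<longleftrightarrow>
     (\<exists>F. F \<subseteq> T \<and> card F = k - 1 \<and> card (components V (T - F)) = k \<and>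
          (\<forall>C\<in>components V (T - F). \<forall>D\<in>components V (T - F). card C = card D))"

definition prob_splittable :: "nat \<Rightarrow> 'a set \<Rightarrow> 'a set set \<Rightarrow> real" where
  "prob_splittable k V E =
     real (card {T\<in>spanning_trees V E. k_splittable k V T}) / real (card (spanning_trees V E))"

definition connected_k_partitions :: "nat \<Rightarrow> 'a set \<Rightarrow> 'a set set \<Rightarrow> 'a set set set" where
  "connected_k_partitions k V E =
     {P. card P = k \<and> \<Union>P = V \<and> (\<forall>S\<in>P. \<forall>S'\<in>P. S \<noteq> S' \<longrightarrow> S \<inter> S' = {}) \<and>
         (\<forall>S\<in>P. S \<noteq> {} \<and> graph_connected S (induced_edges E S))}"

definition balanced :: "'a set set \<Rightarrow> bool" where
  "balanced P \<longleftrightarrow> (\<forall>S\<in>P. \<forall>S'\<in>P. card S = card S')"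

definition st_weight :: "'a set set \<Rightarrow> 'a set set \<Rightarrow> nat" where
  "st_weight E P = (\<Prod>S\<in>P. tau S (induced_edges E S))"

definition prob_balanced :: "nat \<Rightarrow> 'a set \<Rightarrow> 'a set set \<Rightarrow> real" where
  "prob_balanced k V E =
     real (\<Sum>P\<in>{P\<in>connected_k_partitions k V E. balanced P}. st_weight E P) /
     real (\<Sum>P\<in>connected_k_partitions k V E. st_weight E P)"

end

theory Submission imports Defs "HOL-Library.FuncSet" begin

definition reach :: "'a set set \<Rightarrow> 'a \<Rightarrow> 'a \<Rightarrow> bool" where
  "reach A x y \<longleftrightarrow> (x,y) \<in> (adj A)\<^sup>*"

definition acyc :: "'a set set \<Rightarrow> bool" where
  "acyc A \<longleftrightarrow> (\<forall>p q. {p,q} \<in> A \<longrightarrow> \<not> reach (A - {{p,q}}) p q)"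

definition cls :: "'a set \<Rightarrow> 'a set set \<Rightarrow> 'a \<Rightarrow> 'a set" where
  "cls V A x = {y\<in>V. reach A x y}"

definition edgesin :: "'a set \<Rightarrow> 'a set set \<Rightarrow> bool" where
  "edgesin V A \<longleftrightarrow> (\<forall>e\<in>A. e \<subseteq> V \<and> card e = 2)"

lemma comps_cls: "components V A = cls V A ` V"
  by (simp add: components_def cls_def reach_def)

lemma adj_iff[simp]: "(x,y) \<in> adj A \<longleftrightarrow> {x,y} \<in> A"
  by (simp add: adj_def)

lemma reach_refl[simp]: "reach A x x" by (simp add: reach_def)

lemma reach_trans: "reach A x y \<Longrightarrow> reach A y z \<Longrightarrow> reach A x z"
  unfolding reach_def by (rule rtrancl_trans)

lemma reach_step: "{x,y} \<in> A \<Longrightarrow> reach A x y"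
  unfolding reach_def by (rule r_into_rtrancl) simp

lemma reach_sym: "reach A x y \<Longrightarrow> reach A y x"
proof -
  have "sym (adj A)" unfolding sym_def by (simp add: insert_commute)
  hence "sym ((adj A)\<^sup>*)" by (rule sym_rtrancl)
  thus "reach A x y \<Longrightarrow> reach A y x" unfolding reach_def sym_def by blast
qed

lemma reach_mono: "A \<subseteq> B \<Longrightarrow> reach A x y \<Longrightarrow> reach B x y"
  unfolding reach_def
proof -
  assume "A \<subseteq> B" "(x,y) \<in> (adj A)\<^sup>*"
  moreover have "adj A \<subseteq> adj B" using \<open>A \<subseteq> B\<close> by (auto simp: adj_def)
  ultimately show "(x,y) \<in> (adj B)\<^sup>*" using rtrancl_mono by blast
qed

lemma reach_insert_imp:
  assumes "reach (insert {a,b} A) x y"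
  shows "reach A x y \<or> (reach A x a \<and> reach A b y) \<or> (reach A x b \<and> reach A a y)"
  using assms unfolding reach_def[of "insert {a,b} A"]
proof (induction rule: rtrancl_induct)
  case base
  then show ?case by simp
next
  case (step y z)
  from step(2) have "{y,z} = {a,b} \<or> {y,z} \<in> A" by simp
  then show ?case
  proof
    assume "{y,z} = {a,b}"
    hence "(y = a \<and> z = b) \<or> (y = b \<and> z = a)" by (auto simp: doubleton_eq_iff)
    then show ?thesis using step(3) by (metis reach_refl reach_sym reach_trans)
  next
    assume "{y,z} \<in> A"
    hence "reach A y z" by (rule reach_step)
    then show ?thesis using step(3) by (metis reach_trans)
  qed
qed

lemma reach_insert:
  "reach (insert {a,b} A) x y \<longleftrightarrow> reach A x y \<or> (reach A x a \<and> reach A b y) \<or> (reach A x b \<and> reach A a y)"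
proof
  assume "reach (insert {a,b} A) x y" thus "reach A x y \<or> (reach A x a \<and> reach A b y) \<or> (reach A x b \<and> reach A a y)"
    by (rule reach_insert_imp)
next
  have m: "reach A u v \<Longrightarrow> reach (insert {a,b} A) u v" for u v by (rule reach_mono[of A]) auto
  have ab: "reach (insert {a,b} A) a b" "reach (insert {a,b} A) b a"
    by (auto intro!: reach_step simp: insert_commute)
  assume "reach A x y \<or> (reach A x a \<and> reach A b y) \<or> (reach A x b \<and> reach A a y)"
  thus "reach (insert {a,b} A) x y" using m ab by (metis reach_trans)
qed

lemma reach_restrict:
  assumes "reach A y z" "y \<in> C" "\<forall>p q. {p,q} \<in> A \<longrightarrow> p \<in> C \<longrightarrow> q \<in> C"
  shows "z \<in> C \<and> reach (induced_edges A C) y z"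
  using assms(1) unfolding reach_def[of A]
proof (induction rule: rtrancl_induct)
  case base
  then show ?case using assms(2) by simp
next
  case (step u w)
  hence e: "{u,w} \<in> A" and u: "u \<in> C" by auto
  hence w: "w \<in> C" using assms(3) by blast
  have "{u,w} \<in> induced_edges A C" using e u w by (simp add: induced_edges_def)
  hence "reach (induced_edges A C) u w" by (rule reach_step)
  moreover have "reach (induced_edges A C) y u" using step.IH by simp
  ultimately show ?case using w reach_trans by metis
qed

lemma acyc_mono: "acyc B \<Longrightarrow> A \<subseteq> B \<Longrightarrow> acyc A"
  unfolding acyc_def by (meson Diff_mono order_refl reach_mono subsetD)

lemma acyc_insert:
  assumes "acyc A" "\<not> reach A p q"
  shows "acyc (insert {p,q} A)"
  unfolding acyc_def
proof (intro allI impI)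
  fix u v assume uv: "{u,v} \<in> insert {p,q} A"
  have pq: "{p,q} \<notin> A" using assms(2) reach_step[of p q A] by blast
  show "\<not> reach (insert {p, q} A - {{u, v}}) u v"
  proof (cases "{u,v} = {p,q}")
    case True
    hence "insert {p, q} A - {{u, v}} = A" using pq by auto
    moreover have "(u = p \<and> v = q) \<or> (u = q \<and> v = p)" using True by (auto simp: doubleton_eq_iff)
    ultimately show ?thesis using assms(2) reach_sym by metis
  next
    case False
    hence uvA: "{u,v} \<in> A" using uv by auto
    have eq: "insert {p, q} A - {{u, v}} = insert {p,q} (A - {{u,v}})" using False by auto
    have nr: "\<not> reach (A - {{u,v}}) u v" using assms(1) uvA unfolding acyc_def by blast
    show ?thesis
    proof
      assume "reach (insert {p, q} A - {{u, v}}) u v"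
      hence "reach (A - {{u,v}}) u v \<or> (reach (A - {{u,v}}) u p \<and> reach (A - {{u,v}}) q v)
          \<or> (reach (A - {{u,v}}) u q \<and> reach (A - {{u,v}}) p v)"
        unfolding eq by (rule reach_insert_imp)
      moreover have "reach A u v" using reach_step[OF uvA] .
      have m: "reach (A - {{u,v}}) s t \<Longrightarrow> reach A s t" for s t by (rule reach_mono[of "A - {{u,v}}"]) auto
      have "reach A p q" if h: "reach (A - {{u,v}}) u p" "reach (A - {{u,v}}) q v"
        using m[OF h(1)] m[OF h(2)] \<open>reach A u v\<close> by (metis reach_sym reach_trans)
      moreover have "reach A p q" if h: "reach (A - {{u,v}}) u q" "reach (A - {{u,v}}) p v"
        using m[OF h(1)] m[OF h(2)] \<open>reach A u v\<close> by (metis reach_sym reach_trans)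
      ultimately show False using nr assms(2) by blast
    qed
  qed
qed


lemma gc_reach: "graph_connected V A \<longleftrightarrow> V \<noteq> {} \<and> (\<forall>u\<in>V. \<forall>v\<in>V. reach A u v)"
  by (simp add: graph_connected_def reach_def)

lemma cls_self: "x \<in> V \<Longrightarrow> x \<in> cls V A x" by (simp add: cls_def)

lemma cls_eq: "reach A x y \<Longrightarrow> cls V A x = cls V A y"
  unfolding cls_def by (auto intro: reach_trans reach_sym)

lemma cls_sub: "cls V A x \<subseteq> V" by (auto simp: cls_def)

lemma card_comps_1:
  assumes "graph_connected V A"
  shows "components V A = {V}"
proof -
  have "cls V A x = V" if "x \<in> V" for x using assms that by (auto simp: gc_reach cls_def)
  thus ?thesis using assms by (auto simp: comps_cls gc_reach)
qed

lemma comps1_gc: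
  assumes "card (components V A) = 1"
  shows "graph_connected V A"
proof -
  obtain C where C: "components V A = {C}" using assms card_1_singletonE by blast
  have "V \<noteq> {}" using C by (auto simp: comps_cls)
  moreover have "reach A u v" if "u \<in> V" "v \<in> V" for u v
  proof -
    have "cls V A u = C" "cls V A v = C" using C that by (auto simp: comps_cls)
    hence "v \<in> cls V A u" using cls_self that by metis
    thus ?thesis by (simp add: cls_def)
  qed
  ultimately show ?thesis by (simp add: gc_reach)
qed

lemma edge2: "card e = 2 \<Longrightarrow> \<exists>u v. e = {u,v} \<and> u \<noteq> v"
  by (simp add: card_2_iff)

lemma tree_acyc:
  assumes "is_tree W T" "edgesin W T"
  shows "acyc T"
  unfolding acyc_def
proof (intro allI impI notI)
  fix p q assume e: "{p,q} \<in> T" and r: "reach (T - {{p,q}}) p q"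
  have pq: "p \<in> W" "q \<in> W" using e assms(2) by (auto simp: edgesin_def)
  have Teq: "T = insert {p,q} (T - {{p,q}})" using e by auto
  have "graph_connected W (T - {{p,q}})"
    unfolding gc_reach
  proof (intro conjI ballI)
    show "W \<noteq> {}" using pq by auto
    fix x y assume "x \<in> W" "y \<in> W"
    hence "reach T x y" using assms(1) by (auto simp: is_tree_def gc_reach)
    hence "reach (insert {p,q} (T - {{p,q}})) x y" using Teq by simp
    thus "reach (T - {{p,q}}) x y" unfolding reach_insert using r by (metis reach_sym reach_trans)
  qed
  thus False using assms(1) e by (auto simp: is_tree_def)
qed

lemma acyc_conn_tree:
  assumes "acyc T" "graph_connected W T" "edgesin W T"
  shows "is_tree W T"
  unfolding is_tree_def
proof (intro conjI ballI notI)
  show "graph_connected W T" by fact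
  fix e assume e: "e \<in> T" and g: "graph_connected W (T - {e})"
  obtain u v where uv: "e = {u,v}" using e assms(3) edge2 unfolding edgesin_def by blast
  have "u \<in> W" "v \<in> W" using e uv assms(3) by (auto simp: edgesin_def)
  hence "reach (T - {e}) u v" using g by (simp add: gc_reach)
  thus False using assms(1) e uv by (simp add: acyc_def)
qed

lemma comps_insert:
  assumes fin: "finite V" and pV: "p \<in> V" and qV: "q \<in> V" and nr: "\<not> reach A p q"
  shows "card (components V (insert {p,q} A)) + 1 = card (components V A)"
proof -
  let ?c = "cls V A" and ?d = "cls V (insert {p,q} A)"
  have d: "?d x = (if reach A x p \<or> reach A x q then ?c p \<union> ?c q else ?c x)" for x
  proof (cases "reach A x p \<or> reach A x q")
    case True
    have "reach (insert {p,q} A) x y \<longleftrightarrow> reach A p y \<or> reach A q y" for y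
    proof -
      have "reach (insert {p,q} A) x y \<longleftrightarrow> reach A x y \<or> (reach A x p \<and> reach A q y) \<or> (reach A x q \<and> reach A p y)"
        by (rule reach_insert)
      moreover have "reach A x p \<Longrightarrow> reach A x y \<longleftrightarrow> reach A p y"
        by (meson reach_sym reach_trans)
      moreover have "reach A x q \<Longrightarrow> reach A x y \<longleftrightarrow> reach A q y"
        by (meson reach_sym reach_trans)
      moreover have "reach A x p \<Longrightarrow> reach A x q \<Longrightarrow> False"
        using nr by (meson reach_sym reach_trans)
      ultimately show ?thesis using True by blast
    qed
    thus ?thesis using True by (auto simp: cls_def)
  next
    case False
    hence "reach (insert {p,q} A) x y \<longleftrightarrow> reach A x y" for y
      using reach_insert[of p q A x y] by blast
    thus ?thesis using False by (auto simp: cls_def)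
  qed
  have neq: "?c p \<noteq> ?c q"
  proof
    assume "?c p = ?c q"
    hence "q \<in> ?c p" using cls_self[OF qV, of A] by simp
    thus False using nr by (simp add: cls_def)
  qed
  have img: "?d ` V = insert (?c p \<union> ?c q) (?c ` V - {?c p, ?c q})"
  proof (rule set_eqI, rule iffI)
    fix C assume "C \<in> ?d ` V"
    then obtain x where x: "x \<in> V" "C = ?d x" by blast
    show "C \<in> insert (?c p \<union> ?c q) (?c ` V - {?c p, ?c q})"
    proof (cases "reach A x p \<or> reach A x q")
      case True thus ?thesis using x d by simp
    next
      case False
      hence "x \<notin> ?c p" "x \<notin> ?c q" by (auto simp: cls_def intro: reach_sym)
      hence "?c x \<noteq> ?c p" "?c x \<noteq> ?c q" using cls_self[OF x(1)] by metis+
      thus ?thesis using x d False by auto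
    qed
  next
    fix C assume C: "C \<in> insert (?c p \<union> ?c q) (?c ` V - {?c p, ?c q})"
    show "C \<in> ?d ` V"
    proof (cases "C = ?c p \<union> ?c q")
      case True thus ?thesis using d[of p] pV by (metis image_eqI reach_refl)
    next
      case False
      then obtain x where x: "x \<in> V" "C = ?c x" "?c x \<noteq> ?c p" "?c x \<noteq> ?c q" using C by auto
      have "\<not> reach A x p" "\<not> reach A x q" using x cls_eq by metis+
      thus ?thesis using x d by (metis image_eqI)
    qed
  qed
  have nin: "?c p \<union> ?c q \<notin> ?c ` V - {?c p, ?c q}"
  proof
    assume "?c p \<union> ?c q \<in> ?c ` V - {?c p, ?c q}"
    then obtain x where x: "x \<in> V" "?c x = ?c p \<union> ?c q" "?c x \<noteq> ?c p" by auto
    have "p \<in> ?c x" using x cls_self[OF pV] by auto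
    hence "reach A x p" by (simp add: cls_def)
    thus False using x cls_eq by metis
  qed
  have finc: "finite (?c ` V)" using fin by simp
  have "card (?d ` V) = card (?c ` V - {?c p, ?c q}) + 1" using img nin finc by simp
  moreover have "card (?c ` V) \<ge> 2"
  proof -
    have "{?c p, ?c q} \<subseteq> ?c ` V" using pV qV by auto
    hence "card {?c p, ?c q} \<le> card (?c ` V)" by (rule card_mono[OF finc])
    moreover have "card {?c p, ?c q} = 2" using neq by simp
    ultimately show ?thesis by simp
  qed
  moreover have "card (?c ` V - {?c p, ?c q}) = card (?c ` V) - card {?c p, ?c q}"
    using pV qV by (intro card_Diff_subset) auto
  moreover have "card {?c p, ?c q} = 2" using neq by simp
  ultimately show ?thesis by (simp add: comps_cls)
qed

lemma comps_empty: "components V {} = (\<lambda>x. {x}) ` V"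
proof -
  have "reach {} x y \<longleftrightarrow> x = y" for x y :: 'a
  proof -
    have "adj ({}::'a set set) = {}" by (simp add: adj_def)
    thus ?thesis by (simp add: reach_def)
  qed
  thus ?thesis by (auto simp: comps_cls cls_def)
qed

lemma forest_count:
  assumes "finite A" "finite V"
  shows "edgesin V A \<Longrightarrow> acyc A \<Longrightarrow> card (components V A) + card A = card V"
  using assms(1)
proof (induction A rule: finite_induct)
  case empty
  have "card ((\<lambda>x. {x}) ` V) = card V" by (simp add: card_image)
  then show ?case by (simp add: comps_empty)
next
  case (insert e A)
  obtain p q where pq: "e = {p,q}" using insert.prems edge2 unfolding edgesin_def by blast
  have pV: "p \<in> V" "q \<in> V" using insert.prems pq by (auto simp: edgesin_def)
  have "acyc A" using insert.prems acyc_mono by blast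
  moreover have "edgesin V A" using insert.prems by (simp add: edgesin_def)
  ultimately have IH: "card (components V A) + card A = card V" using insert.IH by simp
  have "insert e A - {e} = A" using insert.hyps by auto
  hence nr: "\<not> reach A p q" using insert.prems pq by (simp add: acyc_def)
  have "card (components V (insert {p,q} A)) + 1 = card (components V A)"
    by (rule comps_insert[OF assms(2) pV nr])
  thus ?case using IH insert.hyps pq by simp
qed


lemma finite_E: "finite V \<Longrightarrow> edgesin V E \<Longrightarrow> finite E"
proof -
  assume "finite V" "edgesin V E"
  hence "E \<subseteq> Pow V" by (auto simp: edgesin_def)
  thus "finite E" using \<open>finite V\<close> finite_subset by blast
qed

lemma edgesin_mono: "edgesin V E \<Longrightarrow> A \<subseteq> E \<Longrightarrow> edgesin V A"
  by (auto simp: edgesin_def)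

lemma ext:
  assumes fin: "finite V" and eV: "edgesin V E" and gc: "graph_connected V E"
  shows "H \<subseteq> E \<Longrightarrow> acyc H \<Longrightarrow> card (components V H) = Suc j \<Longrightarrow>
     (\<exists>F\<subseteq>E. card F = j \<and> F \<inter> H = {} \<and> acyc (H \<union> F) \<and> card (components V (H \<union> F)) = 1)"
proof (induction j arbitrary: H)
  case 0
  then show ?case by (intro exI[of _ "{}"]) auto
next
  case (Suc j)
  have "\<exists>x\<in>V. \<exists>y\<in>V. \<not> reach H x y"
  proof (rule ccontr)
    assume "\<not> ?thesis"
    hence "graph_connected V H" using gc by (auto simp: gc_reach)
    hence "components V H = {V}" by (rule card_comps_1)
    thus False using Suc.prems by simp
  qed
  then obtain x y where xy: "x \<in> V" "y \<in> V" "\<not> reach H x y" by blast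
  let ?C = "cls V H x"
  have "\<exists>p q. {p,q} \<in> E \<and> p \<in> ?C \<and> q \<notin> ?C"
  proof (rule ccontr)
    assume "\<not> ?thesis"
    hence cl: "\<forall>p q. {p,q} \<in> E \<longrightarrow> p \<in> ?C \<longrightarrow> q \<in> ?C" by blast
    have "reach E x y" using gc xy by (simp add: gc_reach)
    hence "y \<in> ?C" using reach_restrict[OF _ cls_self[OF xy(1)] cl] by blast
    thus False using xy by (simp add: cls_def)
  qed
  then obtain p q where pq: "{p,q} \<in> E" "p \<in> ?C" "q \<notin> ?C" by blast
  have qV: "q \<in> V" and pV: "p \<in> V" using pq eV by (auto simp: edgesin_def)
  have nr: "\<not> reach H p q"
  proof
    assume "reach H p q"
    moreover have "reach H x p" using pq by (simp add: cls_def)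
    ultimately have "reach H x q" using reach_trans by metis
    thus False using pq qV by (simp add: cls_def)
  qed
  have pqH: "{p,q} \<notin> H" using nr reach_step[of p q H] by blast
  let ?H' = "insert {p,q} H"
  have "acyc ?H'" using acyc_insert[OF Suc.prems(2) nr] .
  moreover have "?H' \<subseteq> E" using Suc.prems pq by auto
  moreover have "card (components V ?H') = Suc j"
    using comps_insert[OF fin pV qV nr] Suc.prems by simp
  ultimately obtain F' where F': "F' \<subseteq> E" "card F' = j" "F' \<inter> ?H' = {}" "acyc (?H' \<union> F')"
      "card (components V (?H' \<union> F')) = 1" using Suc.IH by blast
  have finF: "finite F'" using F'(1) finite_E[OF fin eV] finite_subset by blast
  have "{p,q} \<notin> F'" using F'(3) by auto
  hence "card (insert {p,q} F') = Suc j" using finF F'(2) by simp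
  moreover have "H \<union> insert {p,q} F' = ?H' \<union> F'" by auto
  moreover have "insert {p,q} F' \<inter> H = {}" using F'(3) pqH by auto
  ultimately show ?case using F' pq by (intro exI[of _ "insert {p,q} F'"]) auto
qed

definition FS :: "nat \<Rightarrow> 'a set \<Rightarrow> 'a set set \<Rightarrow> ('a set set \<times> ('a set \<Rightarrow> 'a set set)) set" where
  "FS k V E = Sigma (connected_k_partitions k V E) (\<lambda>P. PiE P (\<lambda>S. spanning_trees S (induced_edges E S)))"

definition Hf :: "'a set set \<Rightarrow> ('a set \<Rightarrow> 'a set set) \<Rightarrow> 'a set set" where
  "Hf P h = \<Union> (h ` P)"

lemma forest_props:
  assumes mem: "(P,h) \<in> FS k V E" and eV: "edgesin V E"
  shows "Hf P h \<subseteq> E" "acyc (Hf P h)" "components V (Hf P h) = P"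
    "\<And>S. S \<in> P \<Longrightarrow> h S = induced_edges (Hf P h) S"
proof -
  have P: "card P = k" "\<Union>P = V" "\<And>S S'. S\<in>P \<Longrightarrow> S'\<in>P \<Longrightarrow> S \<noteq> S' \<Longrightarrow> S \<inter> S' = {}"
    "\<And>S. S \<in> P \<Longrightarrow> S \<noteq> {}"
    using mem by (auto simp: FS_def connected_k_partitions_def)
  have h: "\<And>S. S \<in> P \<Longrightarrow> h S \<subseteq> induced_edges E S \<and> is_tree S (h S)"
    using mem by (auto simp: FS_def spanning_trees_def)
  have hE: "\<And>S. S \<in> P \<Longrightarrow> edgesin S (h S)"
    using h eV by (auto simp: edgesin_def induced_edges_def)
  have key: "f \<in> h S" if "f \<in> Hf P h" "S \<in> P" "f \<inter> S \<noteq> {}" for f S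
  proof -
    note t = that
    obtain S' where S': "S' \<in> P" "f \<in> h S'" using t(1) unfolding Hf_def by blast
    hence "f \<subseteq> S'" using hE by (auto simp: edgesin_def)
    hence "S = S'" using P(3)[OF that(2) S'(1)] that(3) by blast
    thus ?thesis using S' by simp
  qed
  have fne: "f \<noteq> {}" if "f \<in> Hf P h" for f
  proof -
    note t = that
    obtain S where S: "S \<in> P" "f \<in> h S" using t unfolding Hf_def by blast
    hence "card f = 2" using hE by (simp add: edgesin_def)
    thus ?thesis by auto
  qed
  have fsub: "f \<subseteq> S" if "f \<in> h S" "S \<in> P" for f S using that hE by (auto simp: edgesin_def)
  show HE: "Hf P h \<subseteq> E" using h by (auto simp: Hf_def induced_edges_def)
  show ind: "\<And>S. S \<in> P \<Longrightarrow> h S = induced_edges (Hf P h) S"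
  proof -
    fix S assume S: "S \<in> P"
    show "h S = induced_edges (Hf P h) S"
    proof
      show "h S \<subseteq> induced_edges (Hf P h) S" using S fsub by (auto simp: Hf_def induced_edges_def)
      show "induced_edges (Hf P h) S \<subseteq> h S"
      proof
        fix f assume "f \<in> induced_edges (Hf P h) S"
        hence f1: "f \<in> Hf P h" and f2: "f \<subseteq> S" by (auto simp: induced_edges_def)
        have "f \<noteq> {}" by (rule fne[OF f1])
        hence "f \<inter> S \<noteq> {}" using f2 by blast
        thus "f \<in> h S" by (rule key[OF f1 S])
      qed
    qed
  qed
  have clos: "\<forall>p q. {p,q} \<in> B \<longrightarrow> p \<in> S \<longrightarrow> q \<in> S" if "B \<subseteq> Hf P h" "S \<in> P" for B S
  proof (intro allI impI)
    fix p q assume "{p,q} \<in> B" "p \<in> S"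
    hence "{p,q} \<in> h S" using key[OF _ that(2)] that(1) by blast
    thus "q \<in> S" using fsub that(2) by blast
  qed
  show "acyc (Hf P h)"
    unfolding acyc_def
  proof (intro allI impI notI)
    fix p q assume e: "{p,q} \<in> Hf P h" and r: "reach (Hf P h - {{p,q}}) p q"
    obtain S where S: "S \<in> P" "{p,q} \<in> h S" using e by (auto simp: Hf_def)
    have pS: "p \<in> S" using fsub S by blast
    have "reach (induced_edges (Hf P h - {{p,q}}) S) p q"
      using reach_restrict[OF r pS clos[OF _ S(1)]] by blast
    moreover have "induced_edges (Hf P h - {{p,q}}) S = h S - {{p,q}}"
      using ind[OF S(1)] by (auto simp: induced_edges_def)
    ultimately have "reach (h S - {{p,q}}) p q" by simp
    moreover have "acyc (h S)" using tree_acyc h hE S by blast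
    ultimately show False using S by (simp add: acyc_def)
  qed
  have clsS: "cls V (Hf P h) x = S" if "S \<in> P" "x \<in> S" for S x
  proof
    show "cls V (Hf P h) x \<subseteq> S"
      using reach_restrict[OF _ that(2) clos[OF _ that(1)]] by (auto simp: cls_def)
    show "S \<subseteq> cls V (Hf P h) x"
    proof
      fix y assume y: "y \<in> S"
      have "reach (h S) x y" using h[OF that(1)] that y by (simp add: is_tree_def gc_reach)
      moreover have "h S \<subseteq> Hf P h" using that by (auto simp: Hf_def)
      ultimately have "reach (Hf P h) x y" using reach_mono by metis
      moreover have "y \<in> V" using P(2) y that by blast
      ultimately show "y \<in> cls V (Hf P h) x" by (simp add: cls_def)
    qed
  qed
  show "components V (Hf P h) = P"
  proof
    show "components V (Hf P h) \<subseteq> P"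
    proof
      fix C assume "C \<in> components V (Hf P h)"
      then obtain x where x: "x \<in> V" "C = cls V (Hf P h) x" by (auto simp: comps_cls)
      then obtain S where "S \<in> P" "x \<in> S" using P(2) by blast
      thus "C \<in> P" using clsS x by simp
    qed
    show "P \<subseteq> components V (Hf P h)"
    proof
      fix S assume S: "S \<in> P"
      then obtain x where "x \<in> S" using P(4) by blast
      moreover hence "x \<in> V" using P(2) S by blast
      ultimately show "S \<in> components V (Hf P h)" using clsS[OF S] by (auto simp: comps_cls)
    qed
  qed
qed


lemma tree_split:
  assumes T: "T \<in> spanning_trees V E" and eV: "edgesin V E" and F: "F \<subseteq> T"
    and ck: "card (components V (T - F)) = k"
  shows "(components V (T - F), restrict (\<lambda>S. induced_edges (T - F) S) (components V (T - F))) \<in> FS k V E"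
    "Hf (components V (T - F)) (restrict (\<lambda>S. induced_edges (T - F) S) (components V (T - F))) = T - F"
proof -
  let ?A = "T - F" let ?P = "components V ?A"
  have TE: "T \<subseteq> E" and tr: "is_tree V T" using T by (auto simp: spanning_trees_def)
  have eT: "edgesin V T" using eV TE edgesin_mono by blast
  have acA: "acyc ?A" using tree_acyc[OF tr eT] acyc_mono by blast
  have eA: "edgesin V ?A" using eT edgesin_mono by blast
  have part: "S \<noteq> {} \<and> is_tree S (induced_edges ?A S) \<and> induced_edges ?A S \<subseteq> induced_edges E S
      \<and> graph_connected S (induced_edges E S)" if "S \<in> ?P" for S
  proof -
    note t = that
    obtain x where x: "x \<in> V" "S = cls V ?A x" using t unfolding comps_cls by blast
    have cl: "\<forall>p q. {p,q} \<in> ?A \<longrightarrow> p \<in> S \<longrightarrow> q \<in> S"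
    proof (intro allI impI)
      fix p q assume "{p,q} \<in> ?A" "p \<in> S"
      moreover have "q \<in> V" using eA \<open>{p,q} \<in> ?A\<close> unfolding edgesin_def by blast
      moreover have "reach ?A x p" using \<open>p \<in> S\<close> x by (simp add: cls_def)
      moreover have "reach ?A p q" using reach_step[of p q ?A] \<open>{p,q} \<in> ?A\<close> by blast
      ultimately show "q \<in> S" using x reach_trans[of ?A x p q] by (simp add: cls_def)
    qed
    have gc: "graph_connected S (induced_edges ?A S)"
      unfolding gc_reach
    proof (intro conjI ballI)
      show "S \<noteq> {}" using cls_self[OF x(1), of ?A] x(2) by blast
      fix u v assume "u \<in> S" "v \<in> S"
      hence "reach ?A x u" "reach ?A x v" using x by (auto simp: cls_def)
      hence "reach ?A u v" using reach_trans reach_sym by metis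
      thus "reach (induced_edges ?A S) u v" using reach_restrict[OF _ \<open>u \<in> S\<close> cl] by blast
    qed
    have sub: "induced_edges ?A S \<subseteq> induced_edges E S" using TE by (auto simp: induced_edges_def)
    have "induced_edges ?A S \<subseteq> ?A" by (auto simp: induced_edges_def)
    hence "acyc (induced_edges ?A S)" using acA acyc_mono by blast
    moreover have "edgesin S (induced_edges ?A S)" using eA by (auto simp: edgesin_def induced_edges_def)
    ultimately have "is_tree S (induced_edges ?A S)" using acyc_conn_tree gc by blast
    moreover have "graph_connected S (induced_edges E S)"
      using gc reach_mono[OF sub] by (auto simp: gc_reach)
    ultimately show ?thesis using gc sub by (auto simp: gc_reach)
  qed
  have disj: "S \<inter> S' = {}" if "S \<in> ?P" "S' \<in> ?P" "S \<noteq> S'" for S S'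
  proof (rule ccontr)
    note t = that
    assume "S \<inter> S' \<noteq> {}"
    then obtain z where z: "z \<in> S" "z \<in> S'" by blast
    obtain x where x: "x \<in> V" "S = cls V ?A x" using t(1) unfolding comps_cls by blast
    obtain y where y: "y \<in> V" "S' = cls V ?A y" using t(2) unfolding comps_cls by blast
    have "reach ?A x z" using z x by (simp add: cls_def)
    hence "S = cls V ?A z" using x cls_eq by metis
    moreover have "reach ?A y z" using z y by (simp add: cls_def)
    hence "S' = cls V ?A z" using y cls_eq by metis
    ultimately show False using t(3) by simp
  qed
  have un: "\<Union>?P = V"
  proof
    show "\<Union>?P \<subseteq> V" unfolding comps_cls cls_def by blast
    show "V \<subseteq> \<Union>?P"
    proof
      fix x assume x: "x \<in> V"
      hence "x \<in> cls V ?A x" by (rule cls_self)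
      moreover have "cls V ?A x \<in> ?P" using x unfolding comps_cls by blast
      ultimately show "x \<in> \<Union>?P" by blast
    qed
  qed
  show "(?P, restrict (\<lambda>S. induced_edges ?A S) ?P) \<in> FS k V E"
    unfolding FS_def connected_k_partitions_def spanning_trees_def
    using ck un disj part by auto
  show "Hf ?P (restrict (\<lambda>S. induced_edges ?A S) ?P) = ?A"
  proof
    show "Hf ?P (restrict (\<lambda>S. induced_edges ?A S) ?P) \<subseteq> ?A"
      by (auto simp: Hf_def induced_edges_def)
    show "?A \<subseteq> Hf ?P (restrict (\<lambda>S. induced_edges ?A S) ?P)"
    proof
      fix e assume e: "e \<in> ?A"
      obtain p q where pq: "e = {p,q}" using e eA edge2 unfolding edgesin_def by blast
      have "e \<subseteq> V" using e eA unfolding edgesin_def by blast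
      hence "p \<in> V" "q \<in> V" using pq by auto
      moreover have "reach ?A p q" using e pq reach_step[of p q ?A] by blast
      ultimately have "p \<in> cls V ?A p" "q \<in> cls V ?A p" by (auto simp: cls_def)
      hence "e \<in> induced_edges ?A (cls V ?A p)" using e pq by (auto simp: induced_edges_def)
      moreover have "cls V ?A p \<in> ?P" using \<open>p \<in> V\<close> by (simp add: comps_cls)
      ultimately show "e \<in> Hf ?P (restrict (\<lambda>S. induced_edges ?A S) ?P)"
        by (auto simp: Hf_def)
    qed
  qed
qed

lemma forest_extend:
  assumes mem: "(P,h) \<in> FS k V E" and fin: "finite V" and eV: "edgesin V E"
    and gc: "graph_connected V E" and k: "k \<ge> 1"
  shows "\<exists>F\<subseteq>E. card F = k - 1 \<and> F \<inter> Hf P h = {} \<and> Hf P h \<union> F \<in> spanning_trees V E"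
proof -
  have ck: "card P = k" using mem by (auto simp: FS_def connected_k_partitions_def)
  note fp = forest_props[OF mem eV]
  have "card (components V (Hf P h)) = Suc (k - 1)" using fp(3) ck k by simp
  then obtain F where F: "F \<subseteq> E" "card F = k - 1" "F \<inter> Hf P h = {}" "acyc (Hf P h \<union> F)"
    "card (components V (Hf P h \<union> F)) = 1"
    using ext[OF fin eV gc fp(1) fp(2)] by blast
  have "Hf P h \<union> F \<subseteq> E" using F fp by auto
  moreover hence "edgesin V (Hf P h \<union> F)" using eV edgesin_mono by blast
  ultimately have "Hf P h \<union> F \<in> spanning_trees V E"
    using acyc_conn_tree[OF F(4) comps1_gc[OF F(5)]] by (simp add: spanning_trees_def)
  thus ?thesis using F by blast
qed

lemma split_exists:
  assumes T: "T \<in> spanning_trees V E" and fin: "finite V" and eV: "edgesin V E"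
    and k: "k \<ge> 1" "k \<le> card V"
  shows "\<exists>F\<subseteq>T. card F = k - 1 \<and> card (components V (T - F)) = k"
proof -
  have TE: "T \<subseteq> E" and tr: "is_tree V T" using T by (auto simp: spanning_trees_def)
  have eT: "edgesin V T" using eV TE edgesin_mono by blast
  have finT: "finite T" using finite_E[OF fin eV] TE finite_subset by blast
  have acT: "acyc T" using tree_acyc[OF tr eT] .
  have "components V T = {V}" using tr card_comps_1 by (auto simp: is_tree_def)
  hence cT: "1 + card T = card V" using forest_count[OF finT fin eT acT] by simp
  obtain F where F: "F \<subseteq> T" "card F = k - 1" "finite F"
    using obtain_subset_with_card_n[of "k - 1" T] cT k by force
  have "card (components V (T - F)) + card (T - F) = card V"
    using forest_count[of "T - F" V] finT fin eT acT edgesin_mono acyc_mono by blast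
  moreover have "card (T - F) = card T - (k - 1)" using F finT by (simp add: card_Diff_subset)
  ultimately have "card (components V (T - F)) = k" using cT k F by linarith
  thus ?thesis using F by blast
qed


lemma count_rel:
  assumes "finite A" "finite B" "\<forall>a\<in>A. \<exists>b\<in>B. R a b" "\<forall>b\<in>B. card {a\<in>A. R a b} \<le> c"
  shows "card A \<le> c * card B"
proof -
  have "A \<subseteq> (\<Union>b\<in>B. {a\<in>A. R a b})" using assms(3) by blast
  moreover have "finite (\<Union>b\<in>B. {a\<in>A. R a b})" by (rule finite_subset[OF _ assms(1)]) auto
  ultimately have "card A \<le> card (\<Union>b\<in>B. {a\<in>A. R a b})" by (rule card_mono[rotated])
  also have "\<dots> \<le> (\<Sum>b\<in>B. card {a\<in>A. R a b})" by (rule card_UN_le[OF assms(2)])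
  also have "\<dots> \<le> (\<Sum>b\<in>B. c)" using assms(4) by (intro sum_mono) auto
  finally show ?thesis by (simp add: mult.commute)
qed

definition Fs :: "nat \<Rightarrow> 'a set set \<Rightarrow> 'a set set set" where
  "Fs k E = {F. F \<subseteq> E \<and> card F = k - 1}"

lemma card_E:
  assumes "finite V" "edgesin V E" shows "card E \<le> card V * card V"
proof -
  have "E \<subseteq> (\<lambda>(u,v). {u,v}) ` (V \<times> V)"
  proof
    fix e assume "e \<in> E"
    then obtain u v where "e = {u,v}" "u \<in> V" "v \<in> V" using assms(2) edge2 unfolding edgesin_def
      by (metis insert_subset)
    thus "e \<in> (\<lambda>(u,v). {u,v}) ` (V \<times> V)" by force
  qed
  hence "card E \<le> card (V \<times> V)" using assms(1) card_image_le card_mono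
    by (metis (no_types, lifting) finite_SigmaI finite_imageI order_trans)
  thus ?thesis by (simp add: card_cartesian_product)
qed

lemma card_Fs:
  assumes "finite V" "edgesin V E" shows "card (Fs k E) \<le> (card V * card V) ^ (k - 1)"
proof -
  have fE: "finite E" using finite_E assms by blast
  have "card (Fs k E) = card E choose (k - 1)" unfolding Fs_def by (rule n_subsets[OF fE])
  also have "\<dots> \<le> card E ^ (k - 1)"
    by (cases "k - 1 \<le> card E") (auto intro: binomial_le_pow simp: binomial_eq_0)
  also have "\<dots> \<le> (card V * card V) ^ (k - 1)" using card_E[OF assms] by (rule power_mono) simp
  finally show ?thesis .
qed

lemma finite_Fs: "finite E \<Longrightarrow> finite (Fs k E)"
  unfolding Fs_def by (rule finite_subset[of _ "Pow E"]) auto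

lemma finite_ST: "finite V \<Longrightarrow> edgesin V E \<Longrightarrow> finite (spanning_trees V E)"
  unfolding spanning_trees_def by (rule finite_subset[of _ "Pow E"]) (auto dest: finite_E)

lemma finite_CKP: "finite V \<Longrightarrow> k \<ge> 1 \<Longrightarrow> finite (connected_k_partitions k V E)"
  unfolding connected_k_partitions_def by (rule finite_subset[of _ "Pow (Pow V)"]) auto

lemma finite_FS:
  assumes "finite V" "edgesin V E" "k \<ge> 1" shows "finite (FS k V E)"
proof -
  have "finite (spanning_trees S (induced_edges E S))" if "S \<in> P" "P \<in> connected_k_partitions k V E" for S P
  proof -
    have "S \<subseteq> V" using that by (auto simp: connected_k_partitions_def)
    hence "finite S" using assms(1) finite_subset by blast
    moreover have "edgesin S (induced_edges E S)" using assms(2) by (auto simp: edgesin_def induced_edges_def)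
    ultimately show ?thesis by (rule finite_ST)
  qed
  moreover have "finite P" if "P \<in> connected_k_partitions k V E" for P
  proof -
    have "card P = k" using that by (simp add: connected_k_partitions_def)
    hence "card P \<noteq> 0" using assms(3) by simp
    thus ?thesis by (meson card.infinite)
  qed
  ultimately show ?thesis unfolding FS_def using finite_CKP[OF assms(1,3)]
    by (intro finite_SigmaI finite_PiE) auto
qed

lemma fiber1:
  assumes "finite V" "edgesin V E"
  shows "card {T\<in>TT. T \<subseteq> E \<and> (\<exists>F. F \<subseteq> T \<and> card F = k - 1 \<and> T - F = H)} \<le> card (Fs k E)"
proof -
  let ?A = "{T\<in>TT. T \<subseteq> E \<and> (\<exists>F. F \<subseteq> T \<and> card F = k - 1 \<and> T - F = H)}"
  have "inj_on (\<lambda>T. T - H) ?A"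
  proof (rule inj_onI)
    fix T1 T2 assume "T1 \<in> ?A" "T2 \<in> ?A" "T1 - H = T2 - H"
    moreover have "H \<subseteq> T1" "H \<subseteq> T2" using \<open>T1 \<in> ?A\<close> \<open>T2 \<in> ?A\<close> by auto
    ultimately show "T1 = T2" by blast
  qed
  moreover have "(\<lambda>T. T - H) ` ?A \<subseteq> Fs k E"
  proof
    fix G assume "G \<in> (\<lambda>T. T - H) ` ?A"
    then obtain T F where "T \<subseteq> E" "F \<subseteq> T" "card F = k - 1" "T - F = H" "G = T - H" by blast
    moreover hence "T - H = F" by blast
    ultimately show "G \<in> Fs k E" by (auto simp: Fs_def)
  qed
  ultimately show ?thesis by (rule card_inj_on_le[OF _ _ finite_Fs[OF finite_E[OF assms]]])
qed

lemma fiber2: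
  assumes "finite V" "edgesin V E"
  shows "card {x\<in>FS k V E. \<exists>F\<subseteq>E. card F = k - 1 \<and> F \<inter> Hf (fst x) (snd x) = {} \<and> T = Hf (fst x) (snd x) \<union> F}
     \<le> card (Fs k E)"
proof -
  let ?A = "{x\<in>FS k V E. \<exists>F\<subseteq>E. card F = k - 1 \<and> F \<inter> Hf (fst x) (snd x) = {} \<and> T = Hf (fst x) (snd x) \<union> F}"
  have "inj_on (\<lambda>x. T - Hf (fst x) (snd x)) ?A"
  proof (rule inj_onI)
    fix x y assume x: "x \<in> ?A" and y: "y \<in> ?A" and eq: "T - Hf (fst x) (snd x) = T - Hf (fst y) (snd y)"
    obtain P h P' h' where xy: "x = (P,h)" "y = (P',h')" by fastforce
    have "Hf P h \<subseteq> T" "Hf P' h' \<subseteq> T" using x y xy by auto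
    hence HH: "Hf P h = Hf P' h'" using eq xy by auto
    have m: "(P,h) \<in> FS k V E" "(P',h') \<in> FS k V E" using x y xy by auto
    have PP: "P = P'" using forest_props(3)[OF m(1) assms(2)] forest_props(3)[OF m(2) assms(2)] HH by simp
    have "h = h'"
    proof (rule PiE_ext)
      show "h \<in> PiE P (\<lambda>S. spanning_trees S (induced_edges E S))" using m(1) by (simp add: FS_def)
      show "h' \<in> PiE P (\<lambda>S. spanning_trees S (induced_edges E S))" using m(2) PP by (simp add: FS_def)
      fix S assume "S \<in> P"
      thus "h S = h' S" using forest_props(4)[OF m(1) assms(2)] forest_props(4)[OF m(2) assms(2)] HH PP
        by simp
    qed
    thus "x = y" using PP xy by simp
  qed
  moreover have "(\<lambda>x. T - Hf (fst x) (snd x)) ` ?A \<subseteq> Fs k E"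
  proof
    fix G assume "G \<in> (\<lambda>x. T - Hf (fst x) (snd x)) ` ?A"
    then obtain x F where "F \<subseteq> E" "card F = k - 1" "F \<inter> Hf (fst x) (snd x) = {}"
      "T = Hf (fst x) (snd x) \<union> F" "G = T - Hf (fst x) (snd x)" by blast
    moreover hence "G = F" by blast
    ultimately show "G \<in> Fs k E" by (auto simp: Fs_def)
  qed
  ultimately show ?thesis by (rule card_inj_on_le[OF _ _ finite_Fs[OF finite_E[OF assms]]])
qed


definition FSb :: "nat \<Rightarrow> 'a set \<Rightarrow> 'a set set \<Rightarrow> ('a set set \<times> ('a set \<Rightarrow> 'a set set)) set" where
  "FSb k V E = {x \<in> FS k V E. balanced (fst x)}"

lemma sum_FS:
  assumes "finite V" "edgesin V E" "k \<ge> 1"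
  shows "(\<Sum>P\<in>connected_k_partitions k V E. st_weight E P) = card (FS k V E)"
    "(\<Sum>P\<in>{P\<in>connected_k_partitions k V E. balanced P}. st_weight E P) = card (FSb k V E)"
proof -
  have fP: "finite P" if "P \<in> connected_k_partitions k V E" for P
  proof -
    have "card P = k" using that by (simp add: connected_k_partitions_def)
    hence "card P \<noteq> 0" using assms(3) by simp
    thus ?thesis by (meson card.infinite)
  qed
  have fS: "finite (spanning_trees S (induced_edges E S))" if "S \<in> P" "P \<in> connected_k_partitions k V E" for S P
  proof -
    have "S \<subseteq> V" using that by (auto simp: connected_k_partitions_def)
    hence "finite S" using assms(1) finite_subset by blast
    moreover have "edgesin S (induced_edges E S)" using assms(2) by (auto simp: edgesin_def induced_edges_def)
    ultimately show ?thesis by (rule finite_ST)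
  qed
  have w: "st_weight E P = card (PiE P (\<lambda>S. spanning_trees S (induced_edges E S)))"
    if "P \<in> connected_k_partitions k V E" for P
    using fP[OF that] by (simp add: st_weight_def tau_def card_PiE)
  have fin: "finite (PiE P (\<lambda>S. spanning_trees S (induced_edges E S)))"
    if "P \<in> connected_k_partitions k V E" for P
    using fP[OF that] fS that by (intro finite_PiE) auto
  have fC: "finite (connected_k_partitions k V E)" using finite_CKP assms by blast
  show "(\<Sum>P\<in>connected_k_partitions k V E. st_weight E P) = card (FS k V E)"
    unfolding FS_def using fC fin w by (simp add: card_SigmaI)
  have eq: "FSb k V E = Sigma {P\<in>connected_k_partitions k V E. balanced P} (\<lambda>P. PiE P (\<lambda>S. spanning_trees S (induced_edges E S)))"
    by (auto simp: FSb_def FS_def)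
  show "(\<Sum>P\<in>{P\<in>connected_k_partitions k V E. balanced P}. st_weight E P) = card (FSb k V E)"
    unfolding eq using fC fin w by (subst card_SigmaI) auto
qed

lemma count_a:
  assumes "finite V" "edgesin V E" "k \<ge> 1"
  shows "card {T\<in>spanning_trees V E. k_splittable k V T} \<le> card (Fs k E) * card (FSb k V E)"
proof (rule count_rel[where R = "\<lambda>T x. \<exists>F. F \<subseteq> T \<and> card F = k - 1 \<and> T - F = Hf (fst x) (snd x)"])
  show "finite {T\<in>spanning_trees V E. k_splittable k V T}" using finite_ST[OF assms(1,2)] by simp
  show "finite (FSb k V E)" using finite_FS[OF assms] by (simp add: FSb_def)
  show "\<forall>T\<in>{T\<in>spanning_trees V E. k_splittable k V T}. \<exists>x\<in>FSb k V E. \<exists>F. F \<subseteq> T \<and> card F = k - 1 \<and> T - F = Hf (fst x) (snd x)"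
  proof
    fix T assume T: "T \<in> {T\<in>spanning_trees V E. k_splittable k V T}"
    then obtain F where F: "F \<subseteq> T" "card F = k - 1" "card (components V (T - F)) = k"
      "balanced (components V (T - F))" by (auto simp: k_splittable_def balanced_def)
    note ts = tree_split[OF _ assms(2) F(1) F(3)]
    show "\<exists>x\<in>FSb k V E. \<exists>F. F \<subseteq> T \<and> card F = k - 1 \<and> T - F = Hf (fst x) (snd x)"
      using ts T F by (intro bexI[of _ "(components V (T - F), restrict (\<lambda>S. induced_edges (T - F) S) (components V (T - F)))"])
        (auto simp: FSb_def)
  qed
  show "\<forall>x\<in>FSb k V E. card {T\<in>{T\<in>spanning_trees V E. k_splittable k V T}. \<exists>F. F \<subseteq> T \<and> card F = k - 1 \<and> T - F = Hf (fst x) (snd x)} \<le> card (Fs k E)"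
  proof
    fix x
    have "{T\<in>{T\<in>spanning_trees V E. k_splittable k V T}. \<exists>F. F \<subseteq> T \<and> card F = k - 1 \<and> T - F = Hf (fst x) (snd x)}
       \<subseteq> {T\<in>spanning_trees V E. T \<subseteq> E \<and> (\<exists>F. F \<subseteq> T \<and> card F = k - 1 \<and> T - F = Hf (fst x) (snd x))}"
      by (auto simp: spanning_trees_def)
    moreover have "finite {T\<in>spanning_trees V E. T \<subseteq> E \<and> (\<exists>F. F \<subseteq> T \<and> card F = k - 1 \<and> T - F = Hf (fst x) (snd x))}"
      using finite_ST[OF assms(1,2)] by simp
    ultimately have "card {T\<in>{T\<in>spanning_trees V E. k_splittable k V T}. \<exists>F. F \<subseteq> T \<and> card F = k - 1 \<and> T - F = Hf (fst x) (snd x)}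
       \<le> card {T\<in>spanning_trees V E. T \<subseteq> E \<and> (\<exists>F. F \<subseteq> T \<and> card F = k - 1 \<and> T - F = Hf (fst x) (snd x))}"
      by (intro card_mono)
    thus "card {T\<in>{T\<in>spanning_trees V E. k_splittable k V T}. \<exists>F. F \<subseteq> T \<and> card F = k - 1 \<and> T - F = Hf (fst x) (snd x)} \<le> card (Fs k E)"
      using fiber1[OF assms(1,2), of "spanning_trees V E" k "Hf (fst x) (snd x)"] by linarith
  qed
qed

lemma count_d:
  assumes "finite V" "edgesin V E" "k \<ge> 1" "k \<le> card V"
  shows "card (spanning_trees V E) \<le> card (Fs k E) * card (FS k V E)"
proof (rule count_rel[where R = "\<lambda>T x. \<exists>F. F \<subseteq> T \<and> card F = k - 1 \<and> T - F = Hf (fst x) (snd x)"])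
  show "finite (spanning_trees V E)" using finite_ST[OF assms(1,2)] by simp
  show "finite (FS k V E)" using finite_FS[OF assms(1-3)] .
  show "\<forall>T\<in>spanning_trees V E. \<exists>x\<in>FS k V E. \<exists>F. F \<subseteq> T \<and> card F = k - 1 \<and> T - F = Hf (fst x) (snd x)"
  proof
    fix T assume T: "T \<in> spanning_trees V E"
    then obtain F where F: "F \<subseteq> T" "card F = k - 1" "card (components V (T - F)) = k"
      using split_exists[OF T assms(1,2,3,4)] by blast
    note ts = tree_split[OF T assms(2) F(1) F(3)]
    show "\<exists>x\<in>FS k V E. \<exists>F. F \<subseteq> T \<and> card F = k - 1 \<and> T - F = Hf (fst x) (snd x)"
      using ts T F by (intro bexI[of _ "(components V (T - F), restrict (\<lambda>S. induced_edges (T - F) S) (components V (T - F)))"])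
        auto
  qed
  show "\<forall>x\<in>FS k V E. card {T\<in>spanning_trees V E. \<exists>F. F \<subseteq> T \<and> card F = k - 1 \<and> T - F = Hf (fst x) (snd x)} \<le> card (Fs k E)"
  proof
    fix x
    have "{T\<in>spanning_trees V E. \<exists>F. F \<subseteq> T \<and> card F = k - 1 \<and> T - F = Hf (fst x) (snd x)}
       = {T\<in>spanning_trees V E. T \<subseteq> E \<and> (\<exists>F. F \<subseteq> T \<and> card F = k - 1 \<and> T - F = Hf (fst x) (snd x))}"
      by (auto simp: spanning_trees_def)
    thus "card {T\<in>spanning_trees V E. \<exists>F. F \<subseteq> T \<and> card F = k - 1 \<and> T - F = Hf (fst x) (snd x)} \<le> card (Fs k E)"
      using fiber1[OF assms(1,2)] by simp
  qed
qed

lemma count_bc: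
  assumes "finite V" "edgesin V E" "k \<ge> 1" "graph_connected V E"
  shows "card (FS k V E) \<le> card (Fs k E) * card (spanning_trees V E)"
    "card (FSb k V E) \<le> card (Fs k E) * card {T\<in>spanning_trees V E. k_splittable k V T}"
proof -
  let ?R = "\<lambda>x T. \<exists>F\<subseteq>E. card F = k - 1 \<and> F \<inter> Hf (fst x) (snd x) = {} \<and> T = Hf (fst x) (snd x) \<union> F"
  have fb: "card {x\<in>X. ?R x T} \<le> card (Fs k E)" if "X \<subseteq> FS k V E" for X T
  proof -
    have s1: "{x\<in>X. ?R x T} \<subseteq> {x\<in>FS k V E. ?R x T}" using that by auto
    have f1: "finite {x\<in>FS k V E. ?R x T}" using finite_FS[OF assms(1-3)] by auto
    show ?thesis using card_mono[OF f1 s1] fiber2[OF assms(1,2), of k T] by linarith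
  qed
  show "card (FS k V E) \<le> card (Fs k E) * card (spanning_trees V E)"
  proof (rule count_rel[where R = ?R])
    show "finite (FS k V E)" using finite_FS[OF assms(1-3)] .
    show "finite (spanning_trees V E)" using finite_ST[OF assms(1,2)] by simp
    show "\<forall>x\<in>FS k V E. \<exists>T\<in>spanning_trees V E. ?R x T"
    proof
      fix x assume x: "x \<in> FS k V E"
      obtain P h where xe: "x = (P,h)" by fastforce
      obtain F where F: "F \<subseteq> E" "card F = k - 1" "F \<inter> Hf P h = {}" "Hf P h \<union> F \<in> spanning_trees V E"
        using forest_extend[OF x[unfolded xe] assms(1,2,4,3)] by blast
      show "\<exists>T\<in>spanning_trees V E. ?R x T"
        using F xe by (intro bexI[of _ "Hf P h \<union> F"]) auto
    qed
    show "\<forall>T\<in>spanning_trees V E. card {x\<in>FS k V E. ?R x T} \<le> card (Fs k E)" using fb by blast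
  qed
  show "card (FSb k V E) \<le> card (Fs k E) * card {T\<in>spanning_trees V E. k_splittable k V T}"
  proof (rule count_rel[where R = ?R])
    show "finite (FSb k V E)" using finite_FS[OF assms(1-3)] by (simp add: FSb_def)
    show "finite {T\<in>spanning_trees V E. k_splittable k V T}" using finite_ST[OF assms(1,2)] by simp
    show "\<forall>x\<in>FSb k V E. \<exists>T\<in>{T\<in>spanning_trees V E. k_splittable k V T}. ?R x T"
    proof
      fix x assume x: "x \<in> FSb k V E"
      obtain P h where xe: "x = (P,h)" by fastforce
      have m: "(P,h) \<in> FS k V E" and bal: "balanced P" using x xe by (auto simp: FSb_def)
      obtain F where F: "F \<subseteq> E" "card F = k - 1" "F \<inter> Hf P h = {}" "Hf P h \<union> F \<in> spanning_trees V E"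
        using forest_extend[OF m assms(1,2,4,3)] by blast
      have "(Hf P h \<union> F) - F = Hf P h" using F(3) by blast
      moreover have "components V (Hf P h) = P" by (rule forest_props(3)[OF m assms(2)])
      ultimately have eqc: "components V (Hf P h \<union> F - F) = P" by simp
      have cP: "card P = k" using m by (simp add: FS_def connected_k_partitions_def)
      have "k_splittable k V (Hf P h \<union> F)"
        unfolding k_splittable_def
      proof (intro exI[of _ F] conjI)
        show "F \<subseteq> Hf P h \<union> F" by blast
        show "card F = k - 1" by (rule F(2))
        show "card (components V (Hf P h \<union> F - F)) = k" unfolding eqc by (rule cP)
        show "\<forall>C\<in>components V (Hf P h \<union> F - F). \<forall>D\<in>components V (Hf P h \<union> F - F). card C = card D"
          unfolding eqc using bal unfolding balanced_def by blast
      qed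
      thus "\<exists>T\<in>{T\<in>spanning_trees V E. k_splittable k V T}. ?R x T"
        using F xe by (intro bexI[of _ "Hf P h \<union> F"]) auto
    qed
    show "\<forall>T\<in>{T\<in>spanning_trees V E. k_splittable k V T}. card {x\<in>FSb k V E. ?R x T} \<le> card (Fs k E)"
    proof (intro ballI)
      fix T show "card {x\<in>FSb k V E. ?R x T} \<le> card (Fs k E)" by (rule fb) (auto simp: FSb_def)
    qed
  qed
qed


lemma arith:
  fixes S N B Z c pp :: real
  assumes "0 \<le> S" "0 \<le> N" "0 \<le> B" "c \<ge> 1" "pp > 0" "S \<le> c * B" "Z \<le> c * N" "B \<le> Z"
    "1 / pp \<le> S / N"
  shows "1 / (pp * c^2) \<le> B / Z"
proof -
  have "N > 0" using assms(9) assms(5) assms(2) by (cases "N = 0") (auto simp: divide_simps)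
  have "S > 0" using assms(9) assms(5) \<open>N > 0\<close> by (metis assms(1) div_0 order_le_less not_less zero_less_divide_1_iff)
  have "B > 0" using assms(6) \<open>S > 0\<close> assms(4) by (metis assms(3) dual_order.strict_trans1 linorder_not_less mult_zero_right order_antisym_conv)
  have "Z > 0" using \<open>B > 0\<close> assms(8) by linarith
  have "1 / (pp * c^2) = (1/pp) / c^2" by simp
  also have "\<dots> \<le> (S / N) / c^2" using assms(9) assms(4) by (intro divide_right_mono) auto
  also have "\<dots> = (S / c) / (c * N)" by (simp add: power2_eq_square field_simps)
  also have "\<dots> \<le> B / (c * N)"
    using assms(6) assms(4) \<open>N > 0\<close> by (intro divide_right_mono) (auto simp: field_simps)
  also have "\<dots> \<le> B / Z"
    using assms(7) \<open>Z > 0\<close> \<open>B > 0\<close> by (intro divide_left_mono) auto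
  finally show ?thesis .
qed

lemma per_graph:
  assumes wf: "wf_graph V E" and gc: "graph_connected V E" and k: "k \<ge> 1"
  shows "pp > 0 \<Longrightarrow> 1 / pp \<le> prob_splittable k V E \<Longrightarrow>
           1 / (pp * real (card V) ^ (4 * (k - 1))) \<le> prob_balanced k V E"
    "pp > 0 \<Longrightarrow> 1 / pp \<le> prob_balanced k V E \<Longrightarrow>
           1 / (pp * real (card V) ^ (4 * (k - 1))) \<le> prob_splittable k V E"
proof -
  have fin: "finite V" and eV: "edgesin V E" using wf by (auto simp: wf_graph_def edgesin_def)
  have n1: "card V \<ge> 1" using gc fin by (simp add: graph_connected_def Suc_le_eq card_gt_0_iff)
  define cr where "cr = real (card V) ^ (2 * (k - 1))"
  have cr1: "cr \<ge> 1" using n1 by (simp add: cr_def one_le_power)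
  have crsq: "cr^2 = real (card V) ^ (4 * (k - 1))" by (simp add: cr_def power_mult[symmetric] mult.commute)
  have cF: "real (card (Fs k E)) \<le> cr"
  proof -
    have "card (Fs k E) \<le> (card V * card V) ^ (k - 1)" by (rule card_Fs[OF fin eV])
    hence "real (card (Fs k E)) \<le> real ((card V * card V) ^ (k - 1))" by linarith
    thus ?thesis by (simp add: cr_def power_mult power2_eq_square[symmetric] mult.commute)
  qed
  have le: "real x \<le> cr * real y" if "x \<le> card (Fs k E) * y" for x y
  proof -
    have "real x \<le> real (card (Fs k E)) * real y" using that by (metis of_nat_le_iff of_nat_mult)
    also have "\<dots> \<le> cr * real y" using cF by (intro mult_right_mono) auto
    finally show ?thesis .
  qed
  let ?S = "card {T\<in>spanning_trees V E. k_splittable k V T}" and ?N = "card (spanning_trees V E)"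
  let ?B = "card (FSb k V E)" and ?Z = "card (FS k V E)"
  have ps: "prob_splittable k V E = real ?S / real ?N" by (simp add: prob_splittable_def)
  have pb: "prob_balanced k V E = real ?B / real ?Z" using sum_FS[OF fin eV k] by (simp add: prob_balanced_def)
  have SN: "?S \<le> ?N" using finite_ST[OF fin eV] by (intro card_mono) auto
  have BZ: "?B \<le> ?Z" using finite_FS[OF fin eV k] by (intro card_mono) (auto simp: FSb_def)
  show "pp > 0 \<Longrightarrow> 1 / pp \<le> prob_splittable k V E \<Longrightarrow>
           1 / (pp * real (card V) ^ (4 * (k - 1))) \<le> prob_balanced k V E"
  proof -
    assume pp: "pp > 0" "1 / pp \<le> prob_splittable k V E"
    have "1 / (pp * cr^2) \<le> real ?B / real ?Z"
      using arith[OF _ _ _ cr1 pp(1) le[OF count_a[OF fin eV k]] le[OF count_bc(1)[OF fin eV k gc]]]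
        BZ pp(2) ps by simp
    thus ?thesis using crsq pb by simp
  qed
  show "pp > 0 \<Longrightarrow> 1 / pp \<le> prob_balanced k V E \<Longrightarrow>
           1 / (pp * real (card V) ^ (4 * (k - 1))) \<le> prob_splittable k V E"
  proof -
    assume pp: "pp > 0" "1 / pp \<le> prob_balanced k V E"
    have "?B \<noteq> 0"
    proof
      assume "?B = 0" thus False using pp pb by simp
    qed
    then obtain x where x: "x \<in> FSb k V E" by (metis card.empty ex_in_conv)
    obtain P h where xe: "x = (P,h)" by fastforce
    have m: "(P,h) \<in> FS k V E" using x xe by (simp add: FSb_def)
    have "card P = k" using m by (auto simp: FS_def connected_k_partitions_def)
    moreover have "card P \<le> card V" using forest_props(3)[OF m eV] fin by (metis card_image_le comps_cls)
    ultimately have kn: "k \<le> card V" by simp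
    have "1 / (pp * cr^2) \<le> real ?S / real ?N"
      using arith[OF _ _ _ cr1 pp(1) le[OF count_bc(2)[OF fin eV k gc]] le[OF count_d[OF fin eV k kn]]]
        SN pp(2) pb by simp
    thus ?thesis using crsq ps by simp
  qed
qed

theorem mainTheorem7:
  fixes \<G> :: "('a set \<times> 'a set set) set" and k :: nat
  assumes "k \<ge> 1"
    and "\<forall>(V, E)\<in>\<G>. wf_graph V E \<and> graph_connected V E"
  shows "(\<exists>p :: real poly. \<forall>(V, E)\<in>\<G>.
            poly p (real (card V)) > 0 \<and> prob_splittable k V E \<ge> 1 / poly p (real (card V)))
     \<longleftrightarrow> (\<exists>q :: real poly. \<forall>(V, E)\<in>\<G>.
            poly q (real (card V)) > 0 \<and> prob_balanced k V E \<ge> 1 / poly q (real (card V)))"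
proof -
  have pos: "real (card V) > 0" if "(V,E) \<in> \<G>" for V E
    using assms(2) that by (fastforce simp: wf_graph_def graph_connected_def card_gt_0_iff)
  have pm: "poly (p * monom 1 (4 * (k - 1))) x = poly p x * x ^ (4 * (k - 1))" for p :: "real poly" and x
    by (simp add: poly_monom)
  show ?thesis
  proof
    assume "\<exists>p :: real poly. \<forall>(V, E)\<in>\<G>.
            poly p (real (card V)) > 0 \<and> prob_splittable k V E \<ge> 1 / poly p (real (card V))"
    then obtain p :: "real poly" where p: "\<forall>(V, E)\<in>\<G>.
            poly p (real (card V)) > 0 \<and> prob_splittable k V E \<ge> 1 / poly p (real (card V))" by blast
    show "\<exists>q :: real poly. \<forall>(V, E)\<in>\<G>.
            poly q (real (card V)) > 0 \<and> prob_balanced k V E \<ge> 1 / poly q (real (card V))"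
    proof (intro exI[of _ "p * monom 1 (4 * (k - 1))"] ballI, clarify)
      fix V E assume VE: "(V,E) \<in> \<G>"
      have a: "wf_graph V E" "graph_connected V E" using assms(2) VE by auto
      have pp: "poly p (real (card V)) > 0" "1 / poly p (real (card V)) \<le> prob_splittable k V E"
        using p VE by auto
      show "poly (p * monom 1 (4 * (k - 1))) (real (card V)) > 0 \<and>
            prob_balanced k V E \<ge> 1 / poly (p * monom 1 (4 * (k - 1))) (real (card V))"
        using per_graph(1)[OF a assms(1) pp] pp(1) pos[OF VE] by (simp add: poly_monom)
    qed
  next
    assume "\<exists>q :: real poly. \<forall>(V, E)\<in>\<G>.
            poly q (real (card V)) > 0 \<and> prob_balanced k V E \<ge> 1 / poly q (real (card V))"
    then obtain p :: "real poly" where p: "\<forall>(V, E)\<in>\<G>.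
            poly p (real (card V)) > 0 \<and> prob_balanced k V E \<ge> 1 / poly p (real (card V))" by blast
    show "\<exists>q :: real poly. \<forall>(V, E)\<in>\<G>.
            poly q (real (card V)) > 0 \<and> prob_splittable k V E \<ge> 1 / poly q (real (card V))"
    proof (intro exI[of _ "p * monom 1 (4 * (k - 1))"] ballI, clarify)
      fix V E assume VE: "(V,E) \<in> \<G>"
      have a: "wf_graph V E" "graph_connected V E" using assms(2) VE by auto
      have pp: "poly p (real (card V)) > 0" "1 / poly p (real (card V)) \<le> prob_balanced k V E"
        using p VE by auto
      show "poly (p * monom 1 (4 * (k - 1))) (real (card V)) > 0 \<and>
            prob_splittable k V E \<ge> 1 / poly (p * monom 1 (4 * (k - 1))) (real (card V))"
        using per_graph(2)[OF a assms(1) pp] pp(1) pos[OF VE] by (simp add: poly_monom)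
    qed
  qed
qed

end
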